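(* Let $k\ge1$ and $n,m\in A_{2k}$. If $\max\mathcal{CG}(n)<\max\mathcal{CG}(m)$, then $n<m$.
   Context: Fibonacci numbers: $F_1=F_2=1$, $F_{n+1}=F_n+F_{n-1}$ for $n\ge2$. Chung–Graham decomposition: every positive integer $n$ has a unique representation $n=\sum_{i\ge1}c_iF_{2i}$ with $c_i\in\{0,1,2\}$, only finitely many nonzero, such that whenever $c_i=c_j=2$ with $i<j$ there is $k$ with $i<k<j$ and $c_k=0$. Let $\mathcal{CG}(n)$ be the set of $F_{2i}$ with $c_i\neq0$. For $k\ge1$, $A_{2k}=\{n\ge1:\min\mathcal{CG}(n)=F_{2k}\}$. *)

theory Defs
  imports Main "HOL-Number_Theory.Fib"
begin

text \<open>Fibonacci numbers: fib 1 = fib 2 = 1 (library fib, with fib 0 = 0).\<close>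

definition CG_rep :: "nat \<Rightarrow> (nat \<Rightarrow> nat) \<Rightarrow> bool" where
  "CG_rep n c \<longleftrightarrow>
     c 0 = 0 \<and>
     (\<forall>i. c i \<le> 2) \<and>
     finite {i. c i \<noteq> 0} \<and>
     (\<forall>i j. i < j \<and> c i = 2 \<and> c j = 2 \<longrightarrow> (\<exists>k. i < k \<and> k < j \<and> c k = 0)) \<and>
     n = (\<Sum>i\<in>{i. c i \<noteq> 0}. c i * fib (2 * i))"

definition CG_coeffs :: "nat \<Rightarrow> (nat \<Rightarrow> nat)" where
  "CG_coeffs n = (THE c. CG_rep n c)"

definition CG :: "nat \<Rightarrow> nat set" where
  "CG n = {fib (2 * i) | i. i \<ge> 1 \<and> CG_coeffs n i \<noteq> 0}"

definition A :: "nat \<Rightarrow> nat set" where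
  "A k = {n. n \<ge> 1 \<and> Min (CG n) = fib (2 * k)}"

end

theory Submission
  imports Defs
begin

definition valid :: "(nat \<Rightarrow> nat) \<Rightarrow> bool" where
  "valid c \<longleftrightarrow> (\<forall>i. c i \<le> 2) \<and>
     (\<forall>i j. i < j \<and> c i = 2 \<and> c j = 2 \<longrightarrow> (\<exists>k. i < k \<and> k < j \<and> c k = 0))"

definition closed :: "(nat \<Rightarrow> nat) \<Rightarrow> nat \<Rightarrow> bool" where
  "closed c j \<longleftrightarrow> (\<forall>i\<le>j. c i = 2 \<longrightarrow> (\<exists>k. i < k \<and> k \<le> j \<and> c k = 0))"

definition val :: "(nat \<Rightarrow> nat) \<Rightarrow> nat \<Rightarrow> nat" where
  "val c j = (\<Sum>i\<le>j. c i * fib (2 * i))"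

lemma val_Suc: "val c (Suc j) = val c j + c (Suc j) * fib (Suc (Suc (2*j)))"
  by (simp add: val_def)

lemma val_0: "val c 0 = 0" by (simp add: val_def)

lemma fib4: "fib (Suc (Suc (2 * Suc j))) = 2 * fib (Suc (Suc (2*j))) + fib (Suc (2*j))"
  by simp

lemma bound:
  assumes "valid c"
  shows "val c j < fib (Suc (Suc (2*j))) \<and> (closed c j \<longrightarrow> val c j < fib (Suc (2*j)))"
proof (induction j)
  case 0
  then show ?case by (simp add: val_0)
next
  case (Suc j)
  define F where "F = fib (Suc (Suc (2*j)))"
  define G where "G = fib (Suc (2*j))"
  have GF: "G \<le> F" unfolding F_def G_def by (simp add: fib_Suc_mono)
  have f4: "fib (Suc (Suc (2 * Suc j))) = 2 * F + G" unfolding F_def G_def by simp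
  have f3: "fib (Suc (2 * Suc j)) = F + G" unfolding F_def G_def by simp
  have v: "val c (Suc j) = val c j + c (Suc j) * F" unfolding F_def by (simp add: val_Suc)
  have IH1: "val c j < F" using Suc.IH F_def by simp
  have IH2: "closed c j \<Longrightarrow> val c j < G" using Suc.IH G_def by simp
  have le2: "c (Suc j) \<le> 2" using assms valid_def by auto
  consider "c (Suc j) = 0" | "c (Suc j) = 1" | "c (Suc j) = 2" using le2 by linarith
  then show ?case
  proof cases
    case 1
    then show ?thesis using v IH1 GF f3 f4 by simp
  next
    case 2
    have "closed c (Suc j) \<Longrightarrow> closed c j"
      unfolding closed_def
    proof (intro allI impI)
      fix i assume cl: "\<forall>i\<le>Suc j. c i = 2 \<longrightarrow> (\<exists>k>i. k \<le> Suc j \<and> c k = 0)"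
        and i: "i \<le> j" "c i = 2"
      then obtain k where "k > i" "k \<le> Suc j" "c k = 0" using le_SucI by blast
      moreover have "k \<noteq> Suc j" using 2 \<open>c k = 0\<close> by auto
      ultimately show "\<exists>k>i. k \<le> j \<and> c k = 0" by auto
    qed
    then show ?thesis using v IH1 IH2 GF f3 f4 2 by auto
  next
    case 3
    have "closed c j"
      unfolding closed_def
    proof (intro allI impI)
      fix i assume i: "i \<le> j" "c i = 2"
      then obtain k where "i < k" "k < Suc j" "c k = 0"
        using assms 3 unfolding valid_def by (meson le_imp_less_Suc)
      then show "\<exists>k>i. k \<le> j \<and> c k = 0" by auto
    qed
    moreover have "\<not> closed c (Suc j)" using 3 unfolding closed_def by auto
    ultimately show ?thesis using v IH1 IH2 GF f3 f4 3 by auto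
  qed
qed

lemma exist:
  "r < fib (Suc (Suc (2*j))) \<Longrightarrow> \<exists>c. valid c \<and> c 0 = 0 \<and> (\<forall>i>j. c i = 0) \<and> val c j = r
     \<and> (r < fib (Suc (2*j)) \<longrightarrow> closed c j)"
proof (induction j arbitrary: r)
  case 0
  then have "r = 0" by simp
  then show ?case
    by (intro exI[of _ "\<lambda>_. 0"]) (simp add: valid_def closed_def val_def)
next
  case (Suc j)
  define F where "F = fib (Suc (Suc (2*j)))"
  define G where "G = fib (Suc (2*j))"
  have GF: "G \<le> F" unfolding F_def G_def by (simp add: fib_Suc_mono)
  have f4: "fib (Suc (Suc (2 * Suc j))) = 2 * F + G" unfolding F_def G_def by simp
  have f3: "fib (Suc (2 * Suc j)) = F + G" unfolding F_def G_def by simp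
  have r: "r < 2 * F + G" using Suc.prems f4 by simp
  have IH: "\<And>r. r < F \<Longrightarrow> \<exists>c. valid c \<and> c 0 = 0 \<and> (\<forall>i>j. c i = 0) \<and> val c j = r
     \<and> (r < G \<longrightarrow> closed c j)" using Suc.IH unfolding F_def G_def by blast
  have agree: "\<And>c d. (\<forall>i\<le>j. c i = d i) \<Longrightarrow> val c j = val d j"
    unfolding val_def by (rule sum.cong) auto
  consider "r < F" | "F \<le> r" "r < 2 * F" | "2 * F \<le> r" by linarith
  then show ?case
  proof cases
    case 1
    then obtain c where c: "valid c" "c 0 = 0" "\<forall>i>j. c i = 0" "val c j = r"
      using IH[of r] by blast
    have "closed c (Suc j)" unfolding closed_def
    proof (intro allI impI)
      fix i assume "i \<le> Suc j" "c i = 2"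
      then have "i \<le> j" using c(3) by (metis le_SucE lessI zero_neq_numeral)
      then show "\<exists>k>i. k \<le> Suc j \<and> c k = 0" using c(3) by (intro exI[of _ "Suc j"]) auto
    qed
    then show ?thesis using c by (intro exI[of _ c]) (auto simp: val_Suc)
  next
    case 2
    then obtain c where c: "valid c" "c 0 = 0" "\<forall>i>j. c i = 0" "val c j = r - F"
      and cl: "r - F < G \<longrightarrow> closed c j"
      using IH[of "r - F"] 2 by (metis less_diff_conv2 mult_2)
    define d where "d = c(Suc j := 1)"
    have dv: "valid d" unfolding valid_def
    proof (intro conjI allI impI)
      fix i show "d i \<le> 2" using c(1) unfolding d_def valid_def by auto
    next
      fix i j' assume a: "i < j' \<and> d i = 2 \<and> d j' = 2"
      then have "c i = 2" "c j' = 2" "j' \<noteq> Suc j" "j' \<le> j"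
        unfolding d_def using c(3) by (auto split: if_splits) (metis not_le zero_neq_numeral)
      then obtain k where "i < k" "k < j'" "c k = 0" using a c(1) unfolding valid_def by blast
      then show "\<exists>k. i < k \<and> k < j' \<and> d k = 0" using \<open>j' \<le> j\<close> unfolding d_def
        by (intro exI[of _ k]) auto
    qed
    have "val d j = val c j" by (rule agree) (simp add: d_def)
    then have vd: "val d (Suc j) = r" using c(4) 2 by (simp add: val_Suc d_def F_def)
    have "r < F + G \<longrightarrow> closed d (Suc j)"
    proof
      assume "r < F + G"
      then have cc: "closed c j" using cl 2 by auto
      show "closed d (Suc j)" unfolding closed_def
      proof (intro allI impI)
        fix i assume "i \<le> Suc j" "d i = 2"
        then have "i \<le> j" "c i = 2" unfolding d_def by (auto split: if_splits)
        then obtain k where "k > i" "k \<le> j" "c k = 0" using cc unfolding closed_def by blast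
        then show "\<exists>k>i. k \<le> Suc j \<and> d k = 0" unfolding d_def by (intro exI[of _ k]) auto
      qed
    qed
    moreover have "d 0 = 0" "\<forall>i>Suc j. d i = 0" using c(2,3) unfolding d_def by auto
    ultimately show ?thesis using dv vd f3 by (intro exI[of _ d]) auto
  next
    case 3
    then have rr: "r - 2 * F < G" using r by linarith
    then obtain c where c: "valid c" "c 0 = 0" "\<forall>i>j. c i = 0" "val c j = r - 2 * F"
      and cc: "closed c j"
      using IH[of "r - 2 * F"] GF by auto
    define d where "d = c(Suc j := 2)"
    have dv: "valid d" unfolding valid_def
    proof (intro conjI allI impI)
      fix i show "d i \<le> 2" using c(1) unfolding d_def valid_def by auto
    next
      fix i j' assume a: "i < j' \<and> d i = 2 \<and> d j' = 2"
      show "\<exists>k. i < k \<and> k < j' \<and> d k = 0"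
      proof (cases "j' = Suc j")
        case True
        then have "c i = 2" "i \<le> j" using a unfolding d_def by auto
        then obtain k where "k > i" "k \<le> j" "c k = 0" using cc unfolding closed_def by blast
        then show ?thesis using True unfolding d_def by (intro exI[of _ k]) auto
      next
        case False
        then have "c i = 2" "c j' = 2" "j' \<le> j"
          using a c(3) unfolding d_def by (auto split: if_splits) (metis not_le zero_neq_numeral)
        then obtain k where "i < k" "k < j'" "c k = 0" using a c(1) unfolding valid_def by blast
        then show ?thesis using \<open>j' \<le> j\<close> unfolding d_def by (intro exI[of _ k]) auto
      qed
    qed
    have "val d j = val c j" by (rule agree) (simp add: d_def)
    then have vd: "val d (Suc j) = r" using c(4) 3 by (simp add: val_Suc d_def F_def)
    have "\<not> r < fib (Suc (2 * Suc j))" using f3 3 GF by simp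
    moreover have "d 0 = 0" "\<forall>i>Suc j. d i = 0" using c(2,3) unfolding d_def by auto
    ultimately show ?thesis using dv vd by (intro exI[of _ d]) auto
  qed
qed

lemma uniq_val:
  assumes "valid c" "valid d" "c 0 = 0" "d 0 = 0"
  shows "val c j = val d j \<Longrightarrow> \<forall>i\<le>j. c i = d i"
proof (induction j)
  case 0
  then show ?case using assms by simp
next
  case (Suc j)
  define F where "F = fib (Suc (Suc (2*j)))"
  have a: "val c j < F" "val d j < F" using bound[OF assms(1)] bound[OF assms(2)] F_def by auto
  have e: "val c j + c (Suc j) * F = val d j + d (Suc j) * F"
    using Suc.prems by (simp add: val_Suc F_def)
  have F0: "F > 0" using a by simp
  have "(val c j + c (Suc j) * F) div F = c (Suc j)" using a F0 by simp
  moreover have "(val d j + d (Suc j) * F) div F = d (Suc j)" using a F0 by simp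
  ultimately have x: "c (Suc j) = d (Suc j)" using e by metis
  then have "val c j = val d j" using e by simp
  then show ?case using Suc.IH x le_Suc_eq by auto
qed

lemma rep_val:
  assumes "CG_rep n c" "{i. c i \<noteq> 0} \<subseteq> {..N}"
  shows "n = val c N"
proof -
  have "n = (\<Sum>i\<in>{i. c i \<noteq> 0}. c i * fib (2 * i))" using assms(1) CG_rep_def by auto
  also have "\<dots> = val c N" unfolding val_def
    by (rule sum.mono_neutral_left) (use assms(2) in auto)
  finally show ?thesis .
qed

lemma rep_valid: "CG_rep n c \<Longrightarrow> valid c \<and> c 0 = 0"
  unfolding CG_rep_def valid_def by blast

lemma rep_bounded: "CG_rep n c \<Longrightarrow> \<exists>N. {i. c i \<noteq> 0} \<subseteq> {..N}"
proof -
  assume "CG_rep n c"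
  then have "finite {i. c i \<noteq> 0}" unfolding CG_rep_def by blast
  then obtain N where "\<forall>x\<in>{i. c i \<noteq> 0}. x \<le> N" using finite_nat_set_iff_bounded_le by blast
  then show ?thesis by auto
qed

lemma n_less_fib: "n < fib (Suc (Suc (2*n)))"
proof (induction n)
  case 0 show ?case by simp
next
  case (Suc n)
  have "fib (Suc (2 * Suc n)) > 0" by (simp add: fib_neq_0_nat)
  moreover have "fib (Suc (Suc (2 * Suc n))) = fib (Suc (2 * Suc n)) + fib (2 * Suc n)"
    by (rule fib.simps(3))
  moreover have "2 * Suc n = Suc (Suc (2*n))" by simp
  ultimately show ?case using Suc.IH by simp
qed

lemma rep_exists: "\<exists>c. CG_rep n c"
proof -
  have "n < fib (Suc (Suc (2*n)))" by (rule n_less_fib)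
  then obtain c where c: "valid c" "c 0 = 0" "\<forall>i>n. c i = 0" "val c n = n"
    using exist by blast
  have sub: "{i. c i \<noteq> 0} \<subseteq> {..n}"
  proof
    fix i assume "i \<in> {i. c i \<noteq> 0}"
    then have "\<not> i > n" using c(3) by auto
    then show "i \<in> {..n}" by simp
  qed
  then have fin: "finite {i. c i \<noteq> 0}" using finite_subset by blast
  have "(\<Sum>i\<in>{i. c i \<noteq> 0}. c i * fib (2 * i)) = val c n" unfolding val_def
    by (rule sum.mono_neutral_left) (use sub in auto)
  then have "CG_rep n c" using c fin unfolding CG_rep_def valid_def by simp
  then show ?thesis by blast
qed

lemma rep_unique: "CG_rep n c \<Longrightarrow> CG_rep n d \<Longrightarrow> c = d"
proof -
  assume c: "CG_rep n c" and d: "CG_rep n d"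
  obtain N1 where N1: "{i. c i \<noteq> 0} \<subseteq> {..N1}" using rep_bounded[OF c] by blast
  obtain N2 where N2: "{i. d i \<noteq> 0} \<subseteq> {..N2}" using rep_bounded[OF d] by blast
  define N where "N = max N1 N2"
  have s1: "{i. c i \<noteq> 0} \<subseteq> {..N}" using N1 N_def by auto
  have s2: "{i. d i \<noteq> 0} \<subseteq> {..N}" using N2 N_def by auto
  have "val c N = val d N" using rep_val[OF c s1] rep_val[OF d s2] by simp
  then have le: "\<forall>i\<le>N. c i = d i" using uniq_val rep_valid[OF c] rep_valid[OF d] by blast
  show "c = d"
  proof (rule ext)
    fix i
    show "c i = d i"
    proof (cases "i \<le> N")
      case True then show ?thesis using le by blast
    next
      case False
      then have "i \<notin> {..N}" by simp
      then have "c i = 0" "d i = 0" using s1 s2 by blast+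
      then show ?thesis by simp
    qed
  qed
qed

lemma coeffs_rep: "CG_rep n (CG_coeffs n)"
proof -
  have "\<exists>!c. CG_rep n c" using rep_exists rep_unique by blast
  then show ?thesis unfolding CG_coeffs_def by (rule theI')
qed

lemma main_facts:
  assumes "n \<ge> 1"
  obtains J where "J \<ge> 1" "Max (CG n) = fib (2*J)" "n < fib (Suc (Suc (2*J)))"
    "fib (2*J) \<le> n"
proof -
  define c where "c = CG_coeffs n"
  have r: "CG_rep n c" using coeffs_rep c_def by simp
  obtain N where N: "{i. c i \<noteq> 0} \<subseteq> {..N}" using rep_bounded r by blast
  have fin: "finite {i. c i \<noteq> 0}" using N finite_subset by blast
  have ne: "{i. c i \<noteq> 0} \<noteq> {}"
  proof
    assume "{i. c i \<noteq> 0} = {}"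
    then have "n = 0" using r unfolding CG_rep_def by simp
    then show False using assms by simp
  qed
  define J where "J = Max {i. c i \<noteq> 0}"
  have J: "c J \<noteq> 0" "\<And>i. c i \<noteq> 0 \<Longrightarrow> i \<le> J" using fin ne J_def Max_in Max_ge by auto
  have c0: "c 0 = 0" using r CG_rep_def by simp
  have J1: "J \<ge> 1" using J c0 by (cases J) auto
  have eqs: "{i. 1 \<le> i \<and> c i \<noteq> 0} = {i. c i \<noteq> 0}"
  proof (intro set_eqI iffI)
    fix i assume "i \<in> {i. c i \<noteq> 0}"
    then have "c i \<noteq> 0" by simp
    then have "i \<noteq> 0" using c0 by (cases i) auto
    then show "i \<in> {i. 1 \<le> i \<and> c i \<noteq> 0}" using \<open>c i \<noteq> 0\<close> by simp
  qed simp
  have "CG n = (\<lambda>i. fib (2*i)) ` {i. 1 \<le> i \<and> c i \<noteq> 0}"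
    unfolding CG_def c_def[symmetric] by blast
  then have CGe: "CG n = (\<lambda>i. fib (2*i)) ` {i. c i \<noteq> 0}" using eqs by simp
  have "Max (CG n) = fib (2*J)" unfolding CGe
    by (rule Max_eqI) (use fin J in \<open>auto intro: fib_mono\<close>)
  moreover have vJ: "n = val c J" using rep_val[OF r] J by auto
  moreover have "val c J < fib (Suc (Suc (2*J)))" using bound rep_valid r by blast
  moreover have "fib (2*J) \<le> n"
  proof -
    have "fib (2*J) \<le> c J * fib (2*J)" using J by simp
    also have "\<dots> \<le> val c J" unfolding val_def
      by (rule member_le_sum[where f="\<lambda>i. c i * fib (2*i)"]) auto
    finally show ?thesis using vJ by simp
  qed
  ultimately show ?thesis using that J1 by auto
qed

theorem corollary3p2:
  fixes k n m :: nat
  assumes "k \<ge> 1" and "n \<in> A k" and "m \<in> A k"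
    and "Max (CG n) < Max (CG m)"
  shows "n < m"
proof -
  have "n \<ge> 1" "m \<ge> 1" using assms A_def by auto
  then obtain J where J: "Max (CG n) = fib (2*J)" "n < fib (Suc (Suc (2*J)))"
    using main_facts[of n] by blast
  obtain K where K: "Max (CG m) = fib (2*K)" "fib (2*K) \<le> m"
    using main_facts[of m] \<open>m \<ge> 1\<close> by blast
  have "J < K"
  proof (rule ccontr)
    assume "\<not> J < K"
    then have "fib (2*K) \<le> fib (2*J)" by (intro fib_mono) simp
    then show False using assms(4) J K by simp
  qed
  then have "fib (Suc (Suc (2*J))) \<le> fib (2*K)" by (intro fib_mono) simp
  then show ?thesis using J K by simp
qed

end
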